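(* Let $0<c<\Gamma_0$ and $t>0$, and let $\mathcal D=\{(\tau,p):0<\tau<t,\ c<p<\Gamma_0\}$. Let $A$ be the cooperation area, regions V and VI, and $w_0,w_1,w_2,A_s,A_c$ be as defined in the context. - If the restriction of $A$ to region V attains its maximum at a point $(\tau^\star,p^\star)$ of region V, then $$A_c(\tau^\star,p^\star;w_1,1)-A_s(\tau^\star,p^\star;w_0,w_1)=1-2w_1+w_0.$$ - If the restriction of $A$ to region VI attains its maximum at a point $(\tau^\star,p^\star)$ of region VI, then $$A_s(\tau^\star,p^\star;w_2,1)-A_c(\tau^\star,p^\star;w_0,w_2)=1-2w_2+w_0.$$ In both cases $w_0,w_1,w_2$ are evaluated at $(\tau^\star,p^\star)$.
   Context: The client utility is linear: $\Gamma(d)=\Gamma_0(1-d)$. For $(\tau,p)\in\mathcal D$ write $s=\tau/t$ and, for $w\in(0,1]$, set $K(w)=1-(1-w)s$. Define $$d_s(w;\tau,p)=1-\frac{cK(w)}{wp},\qquad d_c(w;\tau,p)=1-\frac{p}{\Gamma_0K(w)}.$$ The cooperation area is $$A(\tau,p)=\int_0^1\max\{\min(d_s,d_c),0\}\,dw.$$ For $0\le x\le y\le1$, let $$A_s(\tau,p;x,y)=\int_x^y d_s(w;\tau,p)\,dw,\qquad A_c(\tau,p;x,y)=\int_x^y d_c(w;\tau,p)\,dw.$$ Define the thresholds $$w_0=\max\left\{\frac{c(t-\tau)}{pt-c\tau},\ \frac{pt-\Gamma_0(t-\tau)}{\Gamma_0\tau}\right\},$$ $$w_1=\left(\frac{p-\sqrt{p^2-4c\Gamma_0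 s(1-s)}}{2s\sqrt{c\Gamma_0}}\right)^2,\qquad w_2=\left(\frac{p+\sqrt{p^2-4c\Gamma_0 s(1-s)}}{2s\sqrt{c\Gamma_0}}\right)^2.$$ The regions (subsets of $\mathcal D$) are: - region V: $p^2\ge 4c\Gamma_0 s(1-s)$, $p<\Gamma_0(1-s)+cs$, and $p>\sqrt{c\Gamma_0}$; - region VI: $p^2\ge4c\Gamma_0 s(1-s)$, $p>\Gamma_0(1-s)+cs$, and $p<\sqrt{c\Gamma_0}$. *)

theory Defs
  imports "HOL-Analysis.Analysis"
begin

text \<open>Parameters: c, G (= Gamma_0), t. Point (tau, p); s = tau / t.\<close>

definition Kw :: "real \<Rightarrow> real \<Rightarrow> real \<Rightarrow> real" where
  "Kw t tau w = 1 - (1 - w) * (tau / t)"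

definition d_s :: "real \<Rightarrow> real \<Rightarrow> real \<Rightarrow> real \<Rightarrow> real \<Rightarrow> real" where
  "d_s c t tau p w = 1 - c * Kw t tau w / (w * p)"

definition d_c :: "real \<Rightarrow> real \<Rightarrow> real \<Rightarrow> real \<Rightarrow> real \<Rightarrow> real" where
  "d_c G t tau p w = 1 - p / (G * Kw t tau w)"

definition coop_area :: "real \<Rightarrow> real \<Rightarrow> real \<Rightarrow> real \<Rightarrow> real \<Rightarrow> real" where
  "coop_area c G t tau p =
     integral {0..1} (\<lambda>w. max (min (d_s c t tau p w) (d_c G t tau p w)) 0)"

definition A_s :: "real \<Rightarrow> real \<Rightarrow> real \<Rightarrow> real \<Rightarrow> real \<Rightarrow> real \<Rightarrow> real" where
  "A_s c t tau p x y = integral {x..y} (d_s c t tau p)"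

definition A_c :: "real \<Rightarrow> real \<Rightarrow> real \<Rightarrow> real \<Rightarrow> real \<Rightarrow> real \<Rightarrow> real" where
  "A_c G t tau p x y = integral {x..y} (d_c G t tau p)"

definition w0 :: "real \<Rightarrow> real \<Rightarrow> real \<Rightarrow> real \<Rightarrow> real \<Rightarrow> real" where
  "w0 c G t tau p = max (c * (t - tau) / (p * t - c * tau)) ((p * t - G * (t - tau)) / (G * tau))"

definition w1 :: "real \<Rightarrow> real \<Rightarrow> real \<Rightarrow> real \<Rightarrow> real \<Rightarrow> real" where
  "w1 c G t tau p = (let s = tau / t in
     ((p - sqrt (p\<^sup>2 - 4 * c * G * s * (1 - s))) / (2 * s * sqrt (c * G)))\<^sup>2)"

definition w2 :: "real \<Rightarrow> real \<Rightarrow> real \<Rightarrow> real \<Rightarrow> real \<Rightarrow> real" where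
  "w2 c G t tau p = (let s = tau / t in
     ((p + sqrt (p\<^sup>2 - 4 * c * G * s * (1 - s))) / (2 * s * sqrt (c * G)))\<^sup>2)"

definition in_D :: "real \<Rightarrow> real \<Rightarrow> real \<Rightarrow> real \<Rightarrow> real \<Rightarrow> bool" where
  "in_D c G t tau p \<longleftrightarrow> 0 < tau \<and> tau < t \<and> c < p \<and> p < G"

definition regionV :: "real \<Rightarrow> real \<Rightarrow> real \<Rightarrow> real \<Rightarrow> real \<Rightarrow> bool" where
  "regionV c G t tau p \<longleftrightarrow> in_D c G t tau p \<and>
     (let s = tau / t in p\<^sup>2 \<ge> 4 * c * G * s * (1 - s) \<and> p < G * (1 - s) + c * s
        \<and> p > sqrt (c * G))"

definition regionVI :: "real \<Rightarrow> real \<Rightarrow> real \<Rightarrow> real \<Rightarrow> real \<Rightarrow> bool" where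
  "regionVI c G t tau p \<longleftrightarrow> in_D c G t tau p \<and>
     (let s = tau / t in p\<^sup>2 \<ge> 4 * c * G * s * (1 - s) \<and> p > G * (1 - s) + c * s
        \<and> p < sqrt (c * G))"

end

theory Submission
  imports Defs
begin


definition Sf :: "real \<Rightarrow> real \<Rightarrow> real \<Rightarrow> real \<Rightarrow> real" where
  "Sf c s p w = w - c * (1 - s) / p * ln w - c * s * w / p"
definition Cf :: "real \<Rightarrow> real \<Rightarrow> real \<Rightarrow> real \<Rightarrow> real" where
  "Cf G s p w = w - p/(G* s) * ln (1 - s + s*w)"

lemma Kw_eq: "Kw t tau w = 1 - tau/t + tau/t*w"
  by (simp add: Kw_def left_diff_distrib diff_divide_distrib)

lemma ds_integral:
  assumes "0 < x" "x \<le> y" "p \<noteq> 0" "s = tau/t"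
  shows "(d_s c t tau p has_integral (Sf c s p y - Sf c s p x)) {x..y}"
proof -
  have "(Sf c s p has_vector_derivative d_s c t tau p w) (at w within {x..y})" if "w \<in> {x..y}" for w
  proof -
    have w: "w > 0" using that assms by auto
    have "(Sf c s p has_real_derivative (1 - c*(1-s)/p * (1/w) - c* s/p)) (at w)"
      unfolding Sf_def using w assms(3) by (auto intro!: derivative_eq_intros)
    moreover have "1 - c*(1-s)/p * (1/w) - c* s/p = d_s c t tau p w"
      unfolding d_s_def Kw_eq assms(4) using w assms(3) by (simp add: field_simps)
    ultimately show ?thesis
      by (simp add: has_real_derivative_iff_has_vector_derivative[symmetric] has_field_derivative_at_within)
  qed
  then show ?thesis using fundamental_theorem_of_calculus[OF assms(2)] by blast
qed

lemma dc_integral: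
  assumes "x \<le> y" "s = tau/t" "s \<noteq> 0" "G \<noteq> 0" "\<And>w. w \<in> {x..y} \<Longrightarrow> 1 - s + s*w > 0"
  shows "(d_c G t tau p has_integral (Cf G s p y - Cf G s p x)) {x..y}"
proof -
  have "(Cf G s p has_vector_derivative d_c G t tau p w) (at w within {x..y})" if "w \<in> {x..y}" for w
  proof -
    have w: "1 - s + s*w > 0" using that assms by auto
    have "(Cf G s p has_real_derivative (1 - p/(G* s) * (s / (1 - s + s*w)))) (at w)"
      unfolding Cf_def using w assms(3,4) by (auto intro!: derivative_eq_intros)
    moreover have "1 - p/(G* s) * (s / (1 - s + s*w)) = d_c G t tau p w"
      unfolding d_c_def Kw_eq assms(2)[symmetric] using w assms(3,4) by (simp add: field_simps)
    ultimately show ?thesis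
      by (simp add: has_real_derivative_iff_has_vector_derivative[symmetric] has_field_derivative_at_within)
  qed
  then show ?thesis using fundamental_theorem_of_calculus[OF assms(1)] by blast
qed

lemma Sf_deriv:
  assumes "(Y has_real_derivative Y') (at p)" "Y p > 0" "p \<noteq> 0"
  shows "((\<lambda>q. Sf c s q (Y q)) has_real_derivative
     (Y' * (1 - c*(1-s)/(p*Y p) - c* s/p) + (c*(1-s)/p^2 * ln (Y p) + c* s*Y p/p^2))) (at p)"
  unfolding Sf_def using assms
  by (auto intro!: derivative_eq_intros simp: field_simps power2_eq_square)

lemma Cf_deriv:
  assumes Y: "(Y has_real_derivative Y') (at p)" and Kp: "1 - s + s * Y p > 0" and "s \<noteq> 0" "G \<noteq> 0"
  shows "((\<lambda>q. Cf G s q (Y q)) has_real_derivative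
     (Y' * (1 - p/(G * (1 - s + s * Y p))) - 1/(G * s) * ln (1 - s + s * Y p))) (at p)"
proof -
  define K where "K = 1 - s + s * Y p"
  have K: "K \<noteq> 0" "K > 0" using Kp K_def by auto
  have d1: "((\<lambda>q. ln (1 - s + s * Y q)) has_real_derivative (s * Y' / K)) (at p)"
    using Kp Y unfolding K_def by (auto intro!: derivative_eq_intros)
  have d2: "((\<lambda>q. q / (G * s)) has_real_derivative (1 / (G * s))) (at p)"
    using assms(3,4) by (auto intro!: derivative_eq_intros)
  have D: "((\<lambda>q. Y q - q / (G * s) * ln (1 - s + s * Y q)) has_real_derivative
      (Y' - (1 / (G * s) * ln (1 - s + s * Y p) + s * Y' / K * (p / (G * s))))) (at p)"
    by (intro DERIV_diff Y DERIV_mult d1 d2)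
  have eq: "Y' - (1 / (G * s) * ln (1 - s + s * Y p) + s * Y' / K * (p / (G * s)))
     = Y' * (1 - p/(G * (1 - s + s * Y p))) - 1/(G * s) * ln (1 - s + s * Y p)"
    unfolding K_def[symmetric] using K assms(3,4) by (simp add: field_simps)
  show ?thesis unfolding Cf_def eq[symmetric] by (rule D)
qed


lemma Kw_eq': "s = tau/t \<Longrightarrow> Kw t tau w = 1 - s + s * w"
  by (simp add: Kw_eq)

lemma ds_form:
  assumes "w \<noteq> 0" "p \<noteq> 0" "s = tau/t"
  shows "d_s c t tau p w = (w * p - c * (1 - s + s * w)) / (w * p)"
proof -
  have k: "Kw t tau w = 1 - s + s * w" by (rule Kw_eq'[OF assms(3)])
  have X: "w * p \<noteq> 0" using assms(1,2) by simp
  show ?thesis unfolding d_s_def k using X by (simp add: diff_divide_distrib)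
qed

lemma dc_form:
  assumes "G \<noteq> 0" "1 - s + s * w \<noteq> 0" "s = tau/t"
  shows "d_c G t tau p w = (G * (1 - s + s * w) - p) / (G * (1 - s + s * w))"
proof -
  have k: "Kw t tau w = 1 - s + s * w" by (rule Kw_eq'[OF assms(3)])
  have X: "G * (1 - s + s * w) \<noteq> 0" using assms(1,2) by simp
  show ?thesis unfolding d_c_def k using X by (simp add: diff_divide_distrib)
qed

lemma quad:
  assumes "0 < c" "0 < G" "0 < s" "s < 1" "0 < p" "0 < p^2 - 4 * c * G * s * (1 - s)"
  defines "r \<equiv> sqrt (c * G)"
  defines "u1 \<equiv> (p - sqrt (p^2 - 4 * c * G * s * (1 - s))) / (2 * s * r)"
  defines "u2 \<equiv> (p + sqrt (p^2 - 4 * c * G * s * (1 - s))) / (2 * s * r)"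
  shows "0 < u1" "u1 < u2" "\<And>u. r * (1 - s + s * u^2) - p * u = r * s * (u - u1) * (u - u2)"
proof -
  define D where "D = p^2 - 4 * c * G * s * (1 - s)"
  define d where "d = sqrt D"
  have r: "r > 0" "r^2 = c * G" using assms unfolding r_def by auto
  have D: "D > 0" "D < p^2" using assms unfolding D_def by auto
  have sD: "d > 0" "d^2 = D" using D unfolding d_def by auto
  have sDp: "d < p"
    using D(2) \<open>0 < p\<close> unfolding d_def by (metis abs_of_pos real_sqrt_abs real_sqrt_less_iff)
  have u1: "u1 = (p - d) / (2 * s * r)" "u2 = (p + d) / (2 * s * r)"
    unfolding u1_def u2_def d_def D_def by auto
  have den: "2 * s * r > 0" using r assms by auto
  show "0 < u1" unfolding u1 using sDp den by auto
  show "u1 < u2" unfolding u1 using sD den by (simp add: divide_strict_right_mono)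
  fix u
  have "u1 + u2 = ((p - d) + (p + d)) / (2 * s * r)" unfolding u1 by (rule add_divide_distrib[symmetric])
  also have "\<dots> = p / (s * r)" using den by (simp add: field_simps)
  finally have sum: "u1 + u2 = p / (s * r)" .
  have prod: "u1 * u2 = (p^2 - d^2) / (4 * s^2 * r^2)" unfolding u1 using den
    by (simp add: field_simps power2_eq_square)
  have prod2: "u1 * u2 = (1 - s) / s" unfolding prod sD(2) D_def r(2)[symmetric]
    using r assms by (simp add: field_simps power2_eq_square)
  have "r * s * (u - u1) * (u - u2) = r * s * u^2 - r * s * (u1 + u2) * u + r * s * (u1 * u2)"
    by (simp add: algebra_simps power2_eq_square)
  also have "\<dots> = r * (1 - s + s * u^2) - p * u" unfolding sum prod2 using r assms
    by (simp add: field_simps)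
  finally show "r * (1 - s + s * u^2) - p * u = r * s * (u - u1) * (u - u2)" by simp
qed

lemma diff_form:
  assumes "0 < w" "0 < p" "0 < c" "0 < G" "s = tau/t" "1 - s + s * w > 0"
  shows "d_c G t tau p w - d_s c t tau p w =
    (sqrt (c * G) * (1 - s + s * w) - p * sqrt w) * (sqrt (c * G) * (1 - s + s * w) + p * sqrt w)
      / (G * (1 - s + s * w) * w * p)"
proof -
  define K where "K = 1 - s + s * w"
  have K: "K > 0" using assms K_def by auto
  have r: "sqrt (c * G) ^ 2 = c * G" using assms by simp
  have u: "sqrt w ^ 2 = w" using assms by simp
  have "(sqrt (c * G) * K - p * sqrt w) * (sqrt (c * G) * K + p * sqrt w)
     = sqrt (c * G) ^ 2 * K^2 - p^2 * sqrt w ^ 2" by (simp add: algebra_simps power2_eq_square)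
  also have "\<dots> = c * G * K^2 - p^2 * w" using r u by simp
  finally have e: "(sqrt (c * G) * K - p * sqrt w) * (sqrt (c * G) * K + p * sqrt w)
     = c * G * K^2 - p^2 * w" .
  have ds: "d_s c t tau p w = 1 - c * K / (w * p)" unfolding d_s_def K_def using assms(5) by (simp add: Kw_eq')
  have dc: "d_c G t tau p w = 1 - p / (G * K)" unfolding d_c_def K_def using assms(5) by (simp add: Kw_eq')
  have "d_c G t tau p w - d_s c t tau p w = (c * G * K^2 - p^2 * w) / (G * K * w * p)"
    unfolding ds dc using K assms by (simp add: field_simps power2_eq_square)
  then show ?thesis unfolding K_def[symmetric] e .
qed

lemma diff_sign:
  assumes "0 < w" "0 < p" "0 < c" "0 < G" "s = tau/t" "1 - s + s * w > 0"
  shows "d_c G t tau p w - d_s c t tau p w \<ge> 0 \<longleftrightarrow> sqrt (c * G) * (1 - s + s * w) - p * sqrt w \<ge> 0"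
    "d_c G t tau p w - d_s c t tau p w \<le> 0 \<longleftrightarrow> sqrt (c * G) * (1 - s + s * w) - p * sqrt w \<le> 0"
    "d_c G t tau p w - d_s c t tau p w = 0 \<longleftrightarrow> sqrt (c * G) * (1 - s + s * w) - p * sqrt w = 0"
proof -
  define X where "X = sqrt (c * G) * (1 - s + s * w) - p * sqrt w"
  define Y where "Y = sqrt (c * G) * (1 - s + s * w) + p * sqrt w"
  define Z where "Z = G * (1 - s + s * w) * w * p"
  have Y: "Y > 0" unfolding Y_def using assms by (intro add_pos_nonneg) auto
  have Z: "Z > 0" unfolding Z_def using assms by auto
  have e: "d_c G t tau p w - d_s c t tau p w = X * Y / Z"
    unfolding X_def Y_def Z_def by (rule diff_form[OF assms])
  show "d_c G t tau p w - d_s c t tau p w \<ge> 0 \<longleftrightarrow> sqrt (c * G) * (1 - s + s * w) - p * sqrt w \<ge> 0"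
    unfolding e X_def[symmetric] using Y Z by (simp add: zero_le_divide_iff zero_le_mult_iff)
  show "d_c G t tau p w - d_s c t tau p w \<le> 0 \<longleftrightarrow> sqrt (c * G) * (1 - s + s * w) - p * sqrt w \<le> 0"
    unfolding e X_def[symmetric] using Y Z by (simp add: divide_le_0_iff mult_le_0_iff)
  show "d_c G t tau p w - d_s c t tau p w = 0 \<longleftrightarrow> sqrt (c * G) * (1 - s + s * w) - p * sqrt w = 0"
    unfolding e X_def[symmetric] using Y Z by simp
qed

lemma regV_struct:
  assumes c0: "0 < c" and cG: "c < G" and t0: "0 < t" and R: "regionV c G t tau p"
  defines "s \<equiv> tau / t"
  defines "a \<equiv> c * (1 - s) / (p - c * s)"
  defines "y \<equiv> w1 c G t tau p"
  shows "w0 c G t tau p = a" "0 < a" "a \<le> y" "y \<le> 1" "d_s c t tau p a = 0"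
        "d_s c t tau p y = d_c G t tau p y"
        "coop_area c G t tau p = (Sf c s p y - Sf c s p a) + (Cf G s p 1 - Cf G s p y)"
proof -
  from R have tau: "0 < tau" "tau < t" and pc: "c < p" "p < G" and p1: "p < G * (1 - s) + c * s"
      and pr: "p > sqrt (c * G)"
    unfolding regionV_def in_D_def s_def Let_def by auto
  have sdef: "s = tau / t" by (simp add: s_def)
  have s: "0 < s" "s < 1" using tau t0 unfolding s_def by auto
  have G0: "G > 0" using c0 cG by auto
  have p0: "p > 0" using c0 pc by auto
  define r where "r = sqrt (c * G)"
  have r: "r > 0" "r^2 = c * G" using c0 G0 r_def by auto
  have pr': "p > r" using pr r_def by simp
  have "p^2 > r^2" using pr' r(1) by (intro power_strict_mono) auto
  have "0 \<le> (2 * s - 1)^2" by simp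
  then have s4: "4 * s * (1 - s) \<le> 1" by (simp add: power2_eq_square algebra_simps)
  have "4 * c * G * s * (1 - s) = (c * G) * (4 * s * (1 - s))" by simp
  also have "\<dots> \<le> c * G" using s4 c0 G0 by (simp add: mult_left_le)
  finally have Dpos: "0 < p^2 - 4 * c * G * s * (1 - s)" using \<open>p^2 > r^2\<close> r by linarith
  define u1 where "u1 = (p - sqrt (p^2 - 4 * c * G * s * (1 - s))) / (2 * s * r)"
  define u2 where "u2 = (p + sqrt (p^2 - 4 * c * G * s * (1 - s))) / (2 * s * r)"
  have Q: "0 < u1" "u1 < u2" "\<And>u. r * (1 - s + s * u^2) - p * u = r * s * (u - u1) * (u - u2)"
    using quad[OF c0 G0 s p0 Dpos] unfolding u1_def u2_def r_def by auto
  have y_eq: "y = u1^2" unfolding y_def w1_def Let_def s_def[symmetric] u1_def r_def by simp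
  have sy: "sqrt y = u1" using y_eq Q by simp
  have "r * s * ((1 - u1) * (1 - u2)) < 0" using Q(3)[of 1] pr' by (simp add: algebra_simps)
  then have "(1 - u1) * (1 - u2) < 0" using r s by (simp add: mult_less_0_iff)
  then have u1l: "u1 < 1" and u2g: "1 < u2" using Q(2) by (auto simp: mult_less_0_iff)
  have qs: "r * (1 - s + s * w) - p * sqrt w = r * s * (sqrt w - u1) * (sqrt w - u2)" if "0 \<le> w" for w
    using Q(3)[of "sqrt w"] that by simp
  have Kp: "1 - s + s * w > 0" if "0 < w" for w
    using s that by (smt (verit) mult_pos_pos)
  have pcs: "p - c * s > 0" using pc s c0 by (smt (verit) mult_less_cancel_left1)
  have aeq: "a * (p - c * s) = c * (1 - s)" unfolding a_def using pcs by simp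
  show a0: "0 < a" unfolding a_def using c0 s pcs by simp
  have a1: "a \<le> 1" unfolding a_def using pcs pc s by (simp add: field_simps)
  define b where "b = (p - G * (1 - s)) / (G * s)"
  have "p + G * s < G + c * s" using p1 by (simp add: algebra_simps)
  then have h: "G * (p + G * s) < G * (G + c * s)" using G0 by simp
  have "b < c / G" unfolding b_def using G0 s h by (simp add: field_simps distrib_left)
  moreover have "c / G < a"
  proof -
    have h2: "c * (p + G * s) < c * (G + c * s)" using c0 \<open>p + G * s < G + c * s\<close> by simp
    show ?thesis unfolding a_def using G0 s h2 pcs c0 by (simp add: field_simps distrib_left)
  qed
  ultimately have ab: "b < a" by simp
  have tau_eq: "tau = s * t" unfolding s_def using t0 by simp
  have e1: "c * (t - tau) / (p * t - c * tau) = a"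
  proof -
    have h: "c * (t - tau) = t * (c * (1 - s))" "p * t - c * tau = t * (p - c * s)"
      unfolding tau_eq by (simp_all add: algebra_simps)
    show ?thesis unfolding h a_def using t0 by simp
  qed
  have e2: "(p * t - G * (t - tau)) / (G * tau) = b"
  proof -
    have h: "p * t - G * (t - tau) = t * (p - G * (1 - s))" "G * tau = t * (G * s)"
      unfolding tau_eq by (simp_all add: algebra_simps)
    show ?thesis unfolding h b_def using t0 by simp
  qed
  show "w0 c G t tau p = a" unfolding w0_def e1 e2 using ab by simp
  have ds_le: "d_s c t tau p w \<le> 0" if "0 < w" "w \<le> a" for w
  proof -
    have "w * (p - c * s) \<le> a * (p - c * s)" using that pcs by (simp add: mult_right_mono)
    then have "w * p - c * (1 - s + s * w) \<le> 0" using aeq by (simp add: algebra_simps)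
    moreover have "d_s c t tau p w = (w * p - c * (1 - s + s * w)) / (w * p)"
      by (rule ds_form) (use that p0 sdef in auto)
    ultimately show ?thesis using that p0 by (simp add: divide_nonpos_pos)
  qed
  have ds_ge: "d_s c t tau p w \<ge> 0" if "a \<le> w" for w
  proof -
    have w0: "0 < w" using that a0 by simp
    have "w * (p - c * s) \<ge> a * (p - c * s)" using that pcs by (simp add: mult_right_mono)
    then have "w * p - c * (1 - s + s * w) \<ge> 0" using aeq by (simp add: algebra_simps)
    moreover have "d_s c t tau p w = (w * p - c * (1 - s + s * w)) / (w * p)"
      by (rule ds_form) (use w0 p0 sdef in auto)
    ultimately show ?thesis using w0 p0 by simp
  qed
  have "d_s c t tau p a = (a * p - c * (1 - s + s * a)) / (a * p)"
    by (rule ds_form) (use a0 p0 sdef in auto)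
  then show dsa: "d_s c t tau p a = 0" using a0 p0 aeq
    by (simp add: algebra_simps)
  have dc_pos: "d_c G t tau p w > 0" if "b < w" for w
  proof -
    have "G * s * b < G * s * w" using that G0 s by simp
    moreover have "G * s * b = p - G * (1 - s)" unfolding b_def using G0 s by simp
    ultimately have num: "G * (1 - s + s * w) - p > 0" by (simp add: algebra_simps)
    then have "G * (1 - s + s * w) > 0" using p0 by linarith
    moreover have "d_c G t tau p w = (G * (1 - s + s * w) - p) / (G * (1 - s + s * w))"
      by (rule dc_form) (use G0 \<open>G * (1 - s + s * w) > 0\<close> sdef in auto)
    ultimately show ?thesis using num G0 by simp
  qed
  have cmp: "d_c G t tau p w - d_s c t tau p w \<ge> 0 \<longleftrightarrow> r * s * (sqrt w - u1) * (sqrt w - u2) \<ge> 0"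
     "d_c G t tau p w - d_s c t tau p w \<le> 0 \<longleftrightarrow> r * s * (sqrt w - u1) * (sqrt w - u2) \<le> 0"
     "d_c G t tau p w - d_s c t tau p w = 0 \<longleftrightarrow> r * s * (sqrt w - u1) * (sqrt w - u2) = 0"
     if "0 < w" for w
    using diff_sign[OF that p0 c0 G0 sdef Kp[OF that]] qs[of w] that unfolding r_def by auto
  show ay: "a \<le> y"
  proof (rule ccontr)
    assume "\<not> a \<le> y"
    then have "u1 < sqrt a" using sy by (metis not_le real_sqrt_less_iff)
    moreover have sa1: "sqrt a \<le> 1" using a1 by simp
    then have "sqrt a - u2 < 0" using u2g by linarith
    ultimately have "r * s * (sqrt a - u1) * (sqrt a - u2) < 0" using r s
      by (intro mult_pos_neg mult_pos_pos) auto
    then have "d_c G t tau p a - d_s c t tau p a < 0" using cmp(1)[OF a0] by linarith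
    then show False using dsa dc_pos[OF ab] by simp
  qed
  show y1: "y \<le> 1" using y_eq u1l Q(1) by (simp add: power_le_one)
  show "d_s c t tau p y = d_c G t tau p y" using cmp(3)[of y] sy y_eq Q(1) by simp
  show "coop_area c G t tau p = (Sf c s p y - Sf c s p a) + (Cf G s p 1 - Cf G s p y)"
  proof -
    define m where "m = (\<lambda>w. max (min (d_s c t tau p w) (d_c G t tau p w)) 0)"
    have ca: "coop_area c G t tau p = integral {0..1} m" unfolding coop_area_def m_def ..
    have y0: "0 < y" using y_eq Q(1) by simp
    have m1: "m w = 0" if "w \<in> {0..a} - {0}" for w
      using ds_le[of w] that unfolding m_def by auto
    have m2: "d_s c t tau p w = m w" if "w \<in> {a..y}" for w
    proof -
      have w0: "0 < w" using that a0 by auto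
      have "sqrt w \<le> u1" using that sy by auto
      then have "0 \<le> (r * s) * ((u1 - sqrt w) * (u2 - sqrt w))" using r s Q(2)
        by (intro mult_nonneg_nonneg) auto
      also have "(r * s) * ((u1 - sqrt w) * (u2 - sqrt w)) = r * s * (sqrt w - u1) * (sqrt w - u2)"
        by (simp add: algebra_simps)
      finally have "d_c G t tau p w - d_s c t tau p w \<ge> 0" using cmp(1)[OF w0] by simp
      then show ?thesis using ds_ge[of w] that unfolding m_def by auto
    qed
    have m3: "d_c G t tau p w = m w" if "w \<in> {y..1}" for w
    proof -
      have w0: "0 < w" using that y0 by auto
      have "sqrt w \<ge> u1" using that sy by auto
      moreover have "sqrt w \<le> 1" using that by auto
      then have "u2 - sqrt w \<ge> 0" using u2g by linarith
      ultimately have "0 \<le> (r * s) * ((sqrt w - u1) * (u2 - sqrt w))" using r s u2g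
        by (intro mult_nonneg_nonneg) auto
      also have "(r * s) * ((sqrt w - u1) * (u2 - sqrt w)) = - (r * s * (sqrt w - u1) * (sqrt w - u2))"
        by (simp add: algebra_simps)
      finally have "d_c G t tau p w - d_s c t tau p w \<le> 0" using cmp(2)[OF w0] by simp
      moreover have "d_c G t tau p w > 0" using dc_pos[of w] that ab ay by auto
      ultimately show ?thesis unfolding m_def by auto
    qed
    have h1: "(m has_integral 0) {0..a}"
      by (rule has_integral_spike_finite[where S="{0}" and f="\<lambda>_. 0"]) (use m1 in auto)
    have h2: "(m has_integral (Sf c s p y - Sf c s p a)) {a..y}"
      by (rule has_integral_eq[OF m2 ds_integral[OF a0 ay _ sdef]]) (use p0 in auto)
    have h3: "(m has_integral (Cf G s p 1 - Cf G s p y)) {y..1}"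
      by (rule has_integral_eq[OF m3 dc_integral[OF y1 sdef]]) (use s G0 y0 Kp in auto)
    have h12: "(m has_integral (0 + (Sf c s p y - Sf c s p a))) {0..y}"
      by (rule has_integral_combine[OF _ ay h1 h2]) (use a0 in auto)
    have "(m has_integral ((0 + (Sf c s p y - Sf c s p a)) + (Cf G s p 1 - Cf G s p y))) {0..1}"
      by (rule has_integral_combine[OF _ y1 h12 h3]) (use y0 in auto)
    then show ?thesis unfolding ca by (simp add: integral_unique)
  qed
qed


lemma ds_alt: "w \<noteq> 0 \<Longrightarrow> p \<noteq> 0 \<Longrightarrow> s = tau/t \<Longrightarrow>
   d_s c t tau p w = 1 - c * (1 - s) / (p * w) - c * s / p"
  by (simp add: d_s_def Kw_eq' field_simps)

lemma dc_alt: "s = tau/t \<Longrightarrow> d_c G t tau p w = 1 - p / (G * (1 - s + s * w))"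
  by (simp add: d_c_def Kw_eq')

lemma s4: "0 \<le> s \<Longrightarrow> 4 * c * G * s * (1 - s) \<le> c * G" if "0 < c" "0 < G" for s c G :: real
proof -
  have "0 \<le> (2 * s - 1)^2" by simp
  then have s4: "4 * s * (1 - s) \<le> 1" by (simp add: power2_eq_square algebra_simps)
  have "4 * c * G * s * (1 - s) = (c * G) * (4 * s * (1 - s))" by simp
  also have "\<dots> \<le> c * G" using s4 that by (simp add: mult_left_le)
  finally show ?thesis .
qed

lemma regV_main:
  assumes c0: "0 < c" and cG: "c < G" and t0: "0 < t" and R: "regionV c G t tau p"
    and mx: "\<forall>q. regionV c G t tau q \<longrightarrow> coop_area c G t tau q \<le> coop_area c G t tau p"
  shows "A_c G t tau p (w1 c G t tau p) 1 - A_s c t tau p (w0 c G t tau p) (w1 c G t tau p)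
     = 1 - 2 * w1 c G t tau p + w0 c G t tau p"
proof -
  define s where "s = tau / t"
  have sdef: "s = tau / t" by (simp add: s_def)
  from R have tau: "0 < tau" "tau < t" and pc: "c < p" "p < G" and p1: "p < G * (1 - s) + c * s"
      and pr: "p > sqrt (c * G)"
    unfolding regionV_def in_D_def s_def Let_def by auto
  have s: "0 < s" "s < 1" using tau t0 unfolding s_def by auto
  have G0: "G > 0" using c0 cG by auto
  have p0: "p > 0" using c0 pc by auto
  have pcs: "q - c * s \<noteq> 0" if "q > c" for q using that s c0 by (smt (verit) mult_less_cancel_left1)
  define X where "X = (\<lambda>q. c * (1 - s) / (q - c * s))"
  define Y where "Y = (\<lambda>q. w1 c G t tau q)"
  define F where "F = (\<lambda>q. (Sf c s q (Y q) - Sf c s q (X q)) + (Cf G s q 1 - Cf G s q (Y q)))"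
  have st: "X q = c * (1 - s) / (q - c * s)" "Y q = w1 c G t tau q" for q unfolding X_def Y_def by auto
  have SV: "w0 c G t tau q = X q" "0 < X q" "X q \<le> Y q" "Y q \<le> 1" "d_s c t tau q (X q) = 0"
        "d_s c t tau q (Y q) = d_c G t tau q (Y q)"
        "coop_area c G t tau q = F q" if "regionV c G t tau q" for q
    using regV_struct[OF c0 cG t0 that] unfolding F_def st s_def[symmetric] by auto
  define del where "del = min (min (p - c) (G - p)) (min (G * (1 - s) + c * s - p) (p - sqrt (c * G)))"
  have del0: "del > 0" unfolding del_def using pc p1 pr by auto
  have near: "regionV c G t tau q" if "\<bar>p - q\<bar> < del" for q
  proof -
    have q: "c < q" "q < G" "q < G * (1 - s) + c * s" "q > sqrt (c * G)"
      using that unfolding del_def by auto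
    have "q^2 > sqrt (c * G) ^ 2" using q(4) c0 G0 by (intro power_strict_mono) auto
    then have "q^2 > c * G" using c0 G0 by simp
    moreover have "4 * c * G * s * (1 - s) \<le> c * G" using s4[OF c0 G0] s by simp
    ultimately show ?thesis unfolding regionV_def in_D_def Let_def s_def[symmetric] using q tau by auto
  qed
  have loc: "\<forall>q. \<bar>p - q\<bar> < del \<longrightarrow> F q \<le> F p"
    using near mx SV(7) R by auto
  define D where "D = p^2 - 4 * c * G * s * (1 - s)"
  have Dpos: "D > 0"
  proof -
    have "p^2 > sqrt (c * G) ^ 2" using pr c0 G0 by (intro power_strict_mono) auto
    then have "p^2 > c * G" using c0 G0 by simp
    moreover have "4 * c * G * s * (1 - s) \<le> c * G" using s4[OF c0 G0] s by simp
    ultimately show ?thesis unfolding D_def by simp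
  qed
  have "\<exists>X'. (X has_real_derivative X') (at p)"
    unfolding X_def apply (rule exI) using pcs[OF pc(1)] by (auto intro!: derivative_eq_intros)
  then obtain X' where dX: "(X has_real_derivative X') (at p)" by blast
  have Yf: "Y = (\<lambda>q. ((q - sqrt (q^2 - 4 * c * G * s * (1 - s))) / (2 * s * sqrt (c * G)))^2)"
    unfolding Y_def w1_def Let_def s_def by simp
  have "\<exists>Y'. (Y has_real_derivative Y') (at p)"
    unfolding Yf apply (rule exI) using Dpos s c0 G0 unfolding D_def by (auto intro!: derivative_eq_intros)
  then obtain Y' where dY: "(Y has_real_derivative Y') (at p)" by blast
  have Xp: "X p > 0" and Yp: "Y p > 0" using SV(2,3)[OF R] by auto
  have dS1: "((\<lambda>q. Sf c s q (Y q)) has_real_derivative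
     (Y' * (1 - c*(1-s)/(p*Y p) - c* s/p) + (c*(1-s)/p^2 * ln (Y p) + c* s*Y p/p^2))) (at p)"
    by (rule Sf_deriv[OF dY Yp]) (use p0 in auto)
  have dS2: "((\<lambda>q. Sf c s q (X q)) has_real_derivative
     (X' * (1 - c*(1-s)/(p*X p) - c* s/p) + (c*(1-s)/p^2 * ln (X p) + c* s*X p/p^2))) (at p)"
    by (rule Sf_deriv[OF dX Xp]) (use p0 in auto)
  have KY: "1 - s + s * Y p > 0" using s Yp by (smt (verit) mult_pos_pos)
  have dC1: "((\<lambda>q. Cf G s q ((\<lambda>_. 1) q)) has_real_derivative
     (0 * (1 - p/(G * (1 - s + s * 1))) - 1/(G * s) * ln (1 - s + s * 1))) (at p)"
    by (rule Cf_deriv) (use s G0 in auto)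
  have dC2: "((\<lambda>q. Cf G s q (Y q)) has_real_derivative
     (Y' * (1 - p/(G * (1 - s + s * Y p))) - 1/(G * s) * ln (1 - s + s * Y p))) (at p)"
    by (rule Cf_deriv[OF dY KY]) (use s G0 in auto)
  have dF: "(F has_real_derivative
     ((Y' * (1 - c*(1-s)/(p*Y p) - c* s/p) + (c*(1-s)/p^2 * ln (Y p) + c* s*Y p/p^2))
      - (X' * (1 - c*(1-s)/(p*X p) - c* s/p) + (c*(1-s)/p^2 * ln (X p) + c* s*X p/p^2))
      + ((0 * (1 - p/(G * (1 - s + s * 1))) - 1/(G * s) * ln (1 - s + s * 1))
      - (Y' * (1 - p/(G * (1 - s + s * Y p))) - 1/(G * s) * ln (1 - s + s * Y p))))) (at p)"
    unfolding F_def using DERIV_add[OF DERIV_diff[OF dS1 dS2] DERIV_diff[OF dC1 dC2]] by simp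
  have L0: "((Y' * (1 - c*(1-s)/(p*Y p) - c* s/p) + (c*(1-s)/p^2 * ln (Y p) + c* s*Y p/p^2))
      - (X' * (1 - c*(1-s)/(p*X p) - c* s/p) + (c*(1-s)/p^2 * ln (X p) + c* s*X p/p^2))
      + ((0 * (1 - p/(G * (1 - s + s * 1))) - 1/(G * s) * ln (1 - s + s * 1))
      - (Y' * (1 - p/(G * (1 - s + s * Y p))) - 1/(G * s) * ln (1 - s + s * Y p)))) = 0"
    by (rule DERIV_local_max[OF dF del0 loc])
  have eX: "1 - c*(1-s)/(p*X p) - c* s/p = 0"
    using SV(5)[OF R] ds_alt[of "X p" p s tau t c] Xp p0 sdef by simp
  have eYa: "d_s c t tau p (Y p) = 1 - c*(1-s)/(p*Y p) - c * s/p"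
    by (rule ds_alt) (use Yp p0 sdef in auto)
  have eYb: "d_c G t tau p (Y p) = 1 - p/(G * (1 - s + s * Y p))"
    by (rule dc_alt[OF sdef])
  have eY: "1 - c*(1-s)/(p*Y p) - c * s/p = 1 - p/(G * (1 - s + s * Y p))"
    using SV(6)[OF R] unfolding eYa eYb .
  have L: "c*(1-s)/p^2 * (ln (Y p) - ln (X p)) + c* s*(Y p - X p)/p^2 + 1/(G * s) * ln (1 - s + s * Y p) = 0"
    using L0 unfolding eX eY by (simp add: algebra_simps diff_divide_distrib)
  have Ac: "A_c G t tau p (Y p) 1 = Cf G s p 1 - Cf G s p (Y p)"
    unfolding A_c_def by (rule integral_unique, rule dc_integral[OF SV(4)[OF R] sdef])
      (use s G0 Yp in \<open>auto intro: add_pos_nonneg\<close>)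
  have As: "A_s c t tau p (X p) (Y p) = Sf c s p (Y p) - Sf c s p (X p)"
    unfolding A_s_def by (rule integral_unique, rule ds_integral[OF Xp SV(3)[OF R] _ sdef])
      (use p0 in auto)
  have E: "c*(1-s)/p * (ln (Y p) - ln (X p)) + c* s*(Y p - X p)/p + p/(G* s) * ln (1 - s + s * Y p) = 0"
  proof -
    have "c*(1-s)/p * (ln (Y p) - ln (X p)) + c* s*(Y p - X p)/p + p/(G* s) * ln (1 - s + s * Y p)
       = p * (c*(1-s)/p^2 * (ln (Y p) - ln (X p)) + c* s*(Y p - X p)/p^2 + 1/(G * s) * ln (1 - s + s * Y p))"
      using p0 by (simp add: field_simps power2_eq_square)
    then show ?thesis using L by simp
  qed
  have C1: "Cf G s p 1 = 1" unfolding Cf_def by simp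
  have "A_c G t tau p (Y p) 1 - A_s c t tau p (X p) (Y p) = 1 - 2 * Y p + X p"
  proof -
    have "(1 - Cf G s p (Y p)) - (Sf c s p (Y p) - Sf c s p (X p)) - (1 - 2 * Y p + X p)
      = c*(1-s)/p * (ln (Y p) - ln (X p)) + c* s *(Y p - X p)/p + p/(G* s) * ln (1 - s + s * Y p)"
      unfolding Sf_def Cf_def using p0 s G0 by (simp add: field_simps)
    then show ?thesis unfolding Ac As C1 using E by simp
  qed
  then show ?thesis using SV(1)[OF R] unfolding st by simp
qed

lemma regVI_struct:
  assumes c0: "0 < c" and cG: "c < G" and t0: "0 < t" and R: "regionVI c G t tau p"
  defines "s \<equiv> tau / t"
  defines "b \<equiv> (p - G * (1 - s)) / (G * s)"
  defines "y \<equiv> w2 c G t tau p"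
  shows "w0 c G t tau p = b" "0 < b" "b \<le> y" "y \<le> 1" "d_c G t tau p b = 0"
        "d_s c t tau p y = d_c G t tau p y"
        "coop_area c G t tau p = (Cf G s p y - Cf G s p b) + (Sf c s p 1 - Sf c s p y)"
        "0 < p^2 - 4 * c * G * s * (1 - s)"
proof -
  have sdef: "s = tau / t" by (simp add: s_def)
  from R have tau: "0 < tau" "tau < t" and pc: "c < p" "p < G" and p1: "p > G * (1 - s) + c * s"
      and pr: "p < sqrt (c * G)"
    unfolding regionVI_def in_D_def s_def Let_def by auto
  have s: "0 < s" "s < 1" using tau t0 unfolding s_def by auto
  have G0: "G > 0" using c0 cG by auto
  have p0: "p > 0" using c0 pc by auto
  define r where "r = sqrt (c * G)"
  have r: "r > 0" "r^2 = c * G" using c0 G0 r_def by auto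
  have pr': "p < r" using pr r_def by simp
  have Kp: "1 - s + s * w > 0" if "0 < w" for w
    using s that by (smt (verit) mult_pos_pos)
  have pcs: "p - c * s > 0" using pc s c0 by (smt (verit) mult_less_cancel_left1)
  define a where "a = c * (1 - s) / (p - c * s)"
  have aeq: "a * (p - c * s) = c * (1 - s)" unfolding a_def using pcs by simp
  have a0: "0 < a" unfolding a_def using c0 s pcs by simp
  have beq: "G * s * b = p - G * (1 - s)" unfolding b_def using G0 s by simp
  have hp: "p + G * s > G + c * s" using p1 by (simp add: algebra_simps)
  then have h: "G * (p + G * s) > G * (G + c * s)" using G0 by simp
  have bc: "b > c / G" unfolding b_def using G0 s h hp by (simp add: field_simps distrib_left)
  have h2: "c * (p + G * s) > c * (G + c * s)" using c0 \<open>p + G * s > G + c * s\<close> by simp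
  have "c / G > a" unfolding a_def using G0 s h2 pcs c0 hp by (simp add: field_simps distrib_left)
  with bc have ab: "a < b" by simp
  show b0: "0 < b" using bc c0 G0 by (smt (verit) divide_pos_pos)
  have b1: "b \<le> 1" unfolding b_def using G0 s pc by (simp add: field_simps)
  have tau_eq: "tau = s * t" unfolding s_def using t0 by simp
  have e1: "c * (t - tau) / (p * t - c * tau) = a"
  proof -
    have h: "c * (t - tau) = t * (c * (1 - s))" "p * t - c * tau = t * (p - c * s)"
      unfolding tau_eq by (simp_all add: algebra_simps)
    show ?thesis unfolding h a_def using t0 by simp
  qed
  have e2: "(p * t - G * (t - tau)) / (G * tau) = b"
  proof -
    have h: "p * t - G * (t - tau) = t * (p - G * (1 - s))" "G * tau = t * (G * s)"
      unfolding tau_eq by (simp_all add: algebra_simps)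
    show ?thesis unfolding h b_def using t0 by simp
  qed
  show "w0 c G t tau p = b" unfolding w0_def e1 e2 using ab by simp
  have ds_pos: "d_s c t tau p w > 0" if "a < w" for w
  proof -
    have w0: "0 < w" using that a0 by simp
    have "w * (p - c * s) > a * (p - c * s)" using that pcs by simp
    then have "w * p - c * (1 - s + s * w) > 0" using aeq by (simp add: algebra_simps)
    moreover have "d_s c t tau p w = (w * p - c * (1 - s + s * w)) / (w * p)"
      by (rule ds_form) (use w0 p0 sdef in auto)
    ultimately show ?thesis using w0 p0 by simp
  qed
  have dcf: "d_c G t tau p w = (G * (1 - s + s * w) - p) / (G * (1 - s + s * w))" if "0 < w" for w
    by (rule dc_form) (use G0 Kp[OF that] sdef in auto)
  have dc_ge: "d_c G t tau p w \<ge> 0" if "b \<le> w" for w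
  proof -
    have "G * s * b \<le> G * s * w" using that G0 s by simp
    then have num: "G * (1 - s + s * w) - p \<ge> 0" using beq by (simp add: algebra_simps)
    have w0: "w > 0" using that b0 by simp
    show ?thesis unfolding dcf[OF w0] using num G0 Kp[OF w0] by simp
  qed
  have dc_le: "d_c G t tau p w \<le> 0" if "0 < w" "w \<le> b" for w
  proof -
    have "G * s * w \<le> G * s * b" using that G0 s by simp
    then have num: "G * (1 - s + s * w) - p \<le> 0" using beq by (simp add: algebra_simps)
    show ?thesis unfolding dcf[OF that(1)] using num G0 Kp[OF that(1)] by (simp add: divide_nonpos_pos)
  qed
  show dcb: "d_c G t tau p b = 0" unfolding dcf[OF b0] using beq by (simp add: algebra_simps)
  have cmp: "d_c G t tau p w - d_s c t tau p w \<ge> 0 \<longleftrightarrow> r * (1 - s + s * w) - p * sqrt w \<ge> 0"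
     "d_c G t tau p w - d_s c t tau p w \<le> 0 \<longleftrightarrow> r * (1 - s + s * w) - p * sqrt w \<le> 0"
     "d_c G t tau p w - d_s c t tau p w = 0 \<longleftrightarrow> r * (1 - s + s * w) - p * sqrt w = 0"
     if "0 < w" for w
    using diff_sign[OF that p0 c0 G0 sdef Kp[OF that]] that unfolding r_def by auto
  have qb: "r * (1 - s + s * b) - p * sqrt b < 0"
    using cmp(1)[OF b0] dcb ds_pos[OF ab] by auto
  define D where "D = p^2 - 4 * c * G * s * (1 - s)"
  have ident: "4 * r * s * (r * (1 - s + s * u^2) - p * u) = (2 * r * s * u - p)^2 - (p^2 - 4 * r^2 * s * (1 - s))" for u
    by (simp add: algebra_simps power2_eq_square)
  have "4 * r * s * (r * (1 - s + s * b) - p * sqrt b) = (2 * r * s * sqrt b - p)^2 - D"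
    using ident[of "sqrt b"] b0 unfolding D_def r(2) by (simp add: mult.assoc)
  moreover have "4 * r * s * (r * (1 - s + s * b) - p * sqrt b) < 0"
    using qb r s by (simp add: mult_pos_neg)
  ultimately have Dpos: "0 < D" by (smt (verit) zero_le_power2)
  then show "0 < p^2 - 4 * c * G * s * (1 - s)" unfolding D_def .
  define u1 where "u1 = (p - sqrt (p^2 - 4 * c * G * s * (1 - s))) / (2 * s * r)"
  define u2 where "u2 = (p + sqrt (p^2 - 4 * c * G * s * (1 - s))) / (2 * s * r)"
  have Q: "0 < u1" "u1 < u2" "\<And>u. r * (1 - s + s * u^2) - p * u = r * s * (u - u1) * (u - u2)"
    using quad[OF c0 G0 s p0 Dpos[unfolded D_def]] unfolding u1_def u2_def r_def by auto
  have y_eq: "y = u2^2" unfolding y_def w2_def Let_def s_def[symmetric] u2_def r_def by simp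
  have sy: "sqrt y = u2" using y_eq Q by simp
  have qs: "r * (1 - s + s * w) - p * sqrt w = r * s * (sqrt w - u1) * (sqrt w - u2)" if "0 \<le> w" for w
    using Q(3)[of "sqrt w"] that by simp
  have rs: "r * s > 0" using r s by simp
  have "r * s * ((sqrt b - u1) * (sqrt b - u2)) < 0" using qb qs[of b] b0 by (simp add: mult.assoc)
  then have "(sqrt b - u1) * (sqrt b - u2) < 0"
    using rs mult_nonneg_nonneg[of "r * s" "(sqrt b - u1) * (sqrt b - u2)"] by linarith
  then have bu: "u1 < sqrt b" "sqrt b < u2" using Q(2) by (auto simp: mult_less_0_iff)
  have "r * s * ((1 - u1) * (1 - u2)) > 0" using Q(3)[of 1] pr' by (simp add: algebra_simps)
  then have "(1 - u1) * (1 - u2) > 0"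
    using rs mult_nonneg_nonpos[of "r * s" "(1 - u1) * (1 - u2)"] by linarith
  moreover have "sqrt b \<le> 1" using b1 by simp
  ultimately have u2l: "u2 < 1" using bu Q(2) by (auto simp: zero_less_mult_iff)
  show byl: "b \<le> y" using bu(2) sy b0 by (metis less_imp_le real_sqrt_le_iff)
  show y1: "y \<le> 1" using y_eq u2l Q(1) Q(2) by (simp add: power_le_one)
  have y0: "0 < y" using byl b0 by simp
  show "d_s c t tau p y = d_c G t tau p y" using cmp(3)[OF y0] qs[of y] sy y0 by simp
  show "coop_area c G t tau p = (Cf G s p y - Cf G s p b) + (Sf c s p 1 - Sf c s p y)"
  proof -
    define m where "m = (\<lambda>w. max (min (d_s c t tau p w) (d_c G t tau p w)) 0)"
    have ca: "coop_area c G t tau p = integral {0..1} m" unfolding coop_area_def m_def ..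
    have m1: "m w = 0" if "w \<in> {0..b} - {0}" for w
      using dc_le[of w] that unfolding m_def by auto
    have m2: "d_c G t tau p w = m w" if "w \<in> {b..y}" for w
    proof -
      have w0: "0 < w" using that b0 by auto
      have "sqrt w \<le> u2" using that sy by auto
      moreover have "u1 \<le> sqrt w" using that bu by (smt (verit) atLeastAtMost_iff real_sqrt_le_iff)
      ultimately have "0 \<le> (r * s) * ((sqrt w - u1) * (u2 - sqrt w))" using rs r s
        by (intro mult_nonneg_nonneg) auto
      also have "(r * s) * ((sqrt w - u1) * (u2 - sqrt w)) = - (r * s * (sqrt w - u1) * (sqrt w - u2))"
        by (simp add: algebra_simps)
      finally have "d_c G t tau p w - d_s c t tau p w \<le> 0" using cmp(2)[OF w0] qs[of w] w0 by simp
      then show ?thesis using dc_ge[of w] that unfolding m_def by auto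
    qed
    have m3: "d_s c t tau p w = m w" if "w \<in> {y..1}" for w
    proof -
      have w0: "0 < w" using that y0 by auto
      have "sqrt w \<ge> u2" using that sy by auto
      then have "0 \<le> (r * s) * ((sqrt w - u1) * (sqrt w - u2))" using rs r s Q(2)
        by (intro mult_nonneg_nonneg) auto
      then have "d_c G t tau p w - d_s c t tau p w \<ge> 0" using cmp(1)[OF w0] qs[of w] w0
        by (simp add: mult.assoc)
      moreover have "d_s c t tau p w > 0" using ds_pos[of w] that ab byl by auto
      ultimately show ?thesis unfolding m_def by auto
    qed
    have h1: "(m has_integral 0) {0..b}"
      by (rule has_integral_spike_finite[where S="{0}" and f="\<lambda>_. 0"]) (use m1 in auto)
    have h2: "(m has_integral (Cf G s p y - Cf G s p b)) {b..y}"
      by (rule has_integral_eq[OF m2 dc_integral[OF byl sdef]]) (use s G0 b0 Kp in auto)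
    have h3: "(m has_integral (Sf c s p 1 - Sf c s p y)) {y..1}"
      by (rule has_integral_eq[OF m3 ds_integral[OF y0 y1 _ sdef]]) (use p0 in auto)
    have h12: "(m has_integral (0 + (Cf G s p y - Cf G s p b))) {0..y}"
      by (rule has_integral_combine[OF _ byl h1 h2]) (use b0 in auto)
    have "(m has_integral ((0 + (Cf G s p y - Cf G s p b)) + (Sf c s p 1 - Sf c s p y))) {0..1}"
      by (rule has_integral_combine[OF _ y1 h12 h3]) (use y0 in auto)
    then show ?thesis unfolding ca by (simp add: integral_unique)
  qed
qed

lemma regVI_main:
  assumes c0: "0 < c" and cG: "c < G" and t0: "0 < t" and R: "regionVI c G t tau p"
    and mx: "\<forall>q. regionVI c G t tau q \<longrightarrow> coop_area c G t tau q \<le> coop_area c G t tau p"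
  shows "A_s c t tau p (w2 c G t tau p) 1 - A_c G t tau p (w0 c G t tau p) (w2 c G t tau p)
     = 1 - 2 * w2 c G t tau p + w0 c G t tau p"
proof -
  define s where "s = tau / t"
  have sdef: "s = tau / t" by (simp add: s_def)
  from R have tau: "0 < tau" "tau < t" and pc: "c < p" "p < G" and p1: "p > G * (1 - s) + c * s"
      and pr: "p < sqrt (c * G)"
    unfolding regionVI_def in_D_def s_def Let_def by auto
  have s: "0 < s" "s < 1" using tau t0 unfolding s_def by auto
  have G0: "G > 0" using c0 cG by auto
  have p0: "p > 0" using c0 pc by auto
  define X where "X = (\<lambda>q. (q - G * (1 - s)) / (G * s))"
  define Y where "Y = (\<lambda>q. w2 c G t tau q)"
  define F where "F = (\<lambda>q. (Cf G s q (Y q) - Cf G s q (X q)) + (Sf c s q 1 - Sf c s q (Y q)))"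
  have st: "X q = (q - G * (1 - s)) / (G * s)" "Y q = w2 c G t tau q" for q unfolding X_def Y_def by auto
  have SV: "w0 c G t tau q = X q" "0 < X q" "X q \<le> Y q" "Y q \<le> 1" "d_c G t tau q (X q) = 0"
        "d_s c t tau q (Y q) = d_c G t tau q (Y q)"
        "coop_area c G t tau q = F q" "0 < q^2 - 4 * c * G * s * (1 - s)" if "regionVI c G t tau q" for q
    using regVI_struct[OF c0 cG t0 that] unfolding F_def st s_def[symmetric] by auto
  define k where "k = 4 * c * G * s * (1 - s)"
  have k0: "0 \<le> k" unfolding k_def using c0 G0 s by simp
  have pk: "sqrt k < p" using SV(8)[OF R] p0 unfolding k_def[symmetric]
    by (metis abs_of_pos real_sqrt_abs real_sqrt_less_iff diff_gt_0_iff_gt)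
  define del where "del = min (min (p - c) (G - p)) (min (p - (G * (1 - s) + c * s)) (min (sqrt (c * G) - p) (p - sqrt k)))"
  have del0: "del > 0" unfolding del_def using pc p1 pr pk by auto
  have near: "regionVI c G t tau q" if "\<bar>p - q\<bar> < del" for q
  proof -
    have q: "c < q" "q < G" "q > G * (1 - s) + c * s" "q < sqrt (c * G)" "q > sqrt k"
      using that unfolding del_def by auto
    have "q^2 \<ge> sqrt k ^ 2" using q(5) k0 by (intro power_mono) auto
    then have "q^2 \<ge> k" using k0 by simp
    then show ?thesis unfolding regionVI_def in_D_def Let_def s_def[symmetric] k_def using q tau by auto
  qed
  have loc: "\<forall>q. \<bar>p - q\<bar> < del \<longrightarrow> F q \<le> F p"
    using near mx SV(7) R by auto
  have "\<exists>X'. (X has_real_derivative X') (at p)"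
    unfolding X_def apply (rule exI) using s G0 by (auto intro!: derivative_eq_intros)
  then obtain X' where dX: "(X has_real_derivative X') (at p)" by blast
  have Yf: "Y = (\<lambda>q. ((q + sqrt (q^2 - 4 * c * G * s * (1 - s))) / (2 * s * sqrt (c * G)))^2)"
    unfolding Y_def w2_def Let_def s_def by simp
  have "\<exists>Y'. (Y has_real_derivative Y') (at p)"
    unfolding Yf apply (rule exI) using SV(8)[OF R] s c0 G0 by (auto intro!: derivative_eq_intros)
  then obtain Y' where dY: "(Y has_real_derivative Y') (at p)" by blast
  have Xp: "X p > 0" and Yp: "Y p > 0" using SV(2,3)[OF R] by auto
  have KY: "1 - s + s * Y p > 0" using s Yp by (smt (verit) mult_pos_pos)
  have KX: "1 - s + s * X p > 0" using s Xp by (smt (verit) mult_pos_pos)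
  have dC1: "((\<lambda>q. Cf G s q (Y q)) has_real_derivative
     (Y' * (1 - p/(G * (1 - s + s * Y p))) - 1/(G * s) * ln (1 - s + s * Y p))) (at p)"
    by (rule Cf_deriv[OF dY KY]) (use s G0 in auto)
  have dC2: "((\<lambda>q. Cf G s q (X q)) has_real_derivative
     (X' * (1 - p/(G * (1 - s + s * X p))) - 1/(G * s) * ln (1 - s + s * X p))) (at p)"
    by (rule Cf_deriv[OF dX KX]) (use s G0 in auto)
  have dS1: "((\<lambda>q. Sf c s q ((\<lambda>_. 1) q)) has_real_derivative
     (0 * (1 - c*(1-s)/(p*1) - c * s/p) + (c*(1-s)/p^2 * ln 1 + c * s*1/p^2))) (at p)"
    by (rule Sf_deriv) (use p0 in auto)
  have dS2: "((\<lambda>q. Sf c s q (Y q)) has_real_derivative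
     (Y' * (1 - c*(1-s)/(p*Y p) - c * s/p) + (c*(1-s)/p^2 * ln (Y p) + c * s*Y p/p^2))) (at p)"
    by (rule Sf_deriv[OF dY Yp]) (use p0 in auto)
  have dF: "(F has_real_derivative
     ((Y' * (1 - p/(G * (1 - s + s * Y p))) - 1/(G * s) * ln (1 - s + s * Y p))
      - (X' * (1 - p/(G * (1 - s + s * X p))) - 1/(G * s) * ln (1 - s + s * X p))
      + ((0 * (1 - c*(1-s)/(p*1) - c * s/p) + (c*(1-s)/p^2 * ln 1 + c * s*1/p^2))
      - (Y' * (1 - c*(1-s)/(p*Y p) - c * s/p) + (c*(1-s)/p^2 * ln (Y p) + c * s*Y p/p^2))))) (at p)"
    unfolding F_def using DERIV_add[OF DERIV_diff[OF dC1 dC2] DERIV_diff[OF dS1 dS2]] by simp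
  have L0: "((Y' * (1 - p/(G * (1 - s + s * Y p))) - 1/(G * s) * ln (1 - s + s * Y p))
      - (X' * (1 - p/(G * (1 - s + s * X p))) - 1/(G * s) * ln (1 - s + s * X p))
      + ((0 * (1 - c*(1-s)/(p*1) - c * s/p) + (c*(1-s)/p^2 * ln 1 + c * s*1/p^2))
      - (Y' * (1 - c*(1-s)/(p*Y p) - c * s/p) + (c*(1-s)/p^2 * ln (Y p) + c * s*Y p/p^2)))) = 0"
    by (rule DERIV_local_max[OF dF del0 loc])
  have eX: "1 - p/(G * (1 - s + s * X p)) = 0"
    using SV(5)[OF R] unfolding dc_alt[OF sdef, of G p "X p"] .
  have eYa: "d_s c t tau p (Y p) = 1 - c*(1-s)/(p*Y p) - c * s/p"
    by (rule ds_alt) (use Yp p0 sdef in auto)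
  have eYb: "d_c G t tau p (Y p) = 1 - p/(G * (1 - s + s * Y p))"
    by (rule dc_alt[OF sdef])
  have eY: "1 - c*(1-s)/(p*Y p) - c * s/p = 1 - p/(G * (1 - s + s * Y p))"
    using SV(6)[OF R] unfolding eYa eYb .
  have L: "- 1/(G * s) * (ln (1 - s + s * Y p) - ln (1 - s + s * X p)) + c * s / p^2
      - c*(1-s)/p^2 * ln (Y p) - c * s * Y p / p^2 = 0"
    using L0 unfolding eX eY[symmetric] by (simp add: algebra_simps diff_divide_distrib)
  have As: "A_s c t tau p (Y p) 1 = Sf c s p 1 - Sf c s p (Y p)"
    unfolding A_s_def by (rule integral_unique, rule ds_integral[OF Yp SV(4)[OF R] _ sdef])
      (use p0 in auto)
  have Ac: "A_c G t tau p (X p) (Y p) = Cf G s p (Y p) - Cf G s p (X p)"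
    unfolding A_c_def by (rule integral_unique, rule dc_integral[OF SV(3)[OF R] sdef])
      (use s G0 Xp in \<open>auto intro: add_pos_nonneg\<close>)
  have E: "c*(1-s)/p * ln (Y p) + c * s * (Y p - 1)/p
      + p/(G* s) * (ln (1 - s + s * Y p) - ln (1 - s + s * X p)) = 0"
  proof -
    have "c*(1-s)/p * ln (Y p) + c * s * (Y p - 1)/p
      + p/(G* s) * (ln (1 - s + s * Y p) - ln (1 - s + s * X p))
       = - p * (- 1/(G * s) * (ln (1 - s + s * Y p) - ln (1 - s + s * X p)) + c * s / p^2
      - c*(1-s)/p^2 * ln (Y p) - c * s * Y p / p^2)"
      using p0 s G0 by (simp add: field_simps power2_eq_square)
    then show ?thesis using L by simp
  qed
  have "A_s c t tau p (Y p) 1 - A_c G t tau p (X p) (Y p) = 1 - 2 * Y p + X p"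
  proof -
    have "(Sf c s p 1 - Sf c s p (Y p)) - (Cf G s p (Y p) - Cf G s p (X p)) - (1 - 2 * Y p + X p)
      = c*(1-s)/p * ln (Y p) + c * s * (Y p - 1)/p
      + p/(G* s) * (ln (1 - s + s * Y p) - ln (1 - s + s * X p))"
      unfolding Sf_def Cf_def using p0 s G0 by (simp add: field_simps)
    then show ?thesis unfolding Ac As using E by simp
  qed
  then show ?thesis using SV(1)[OF R] unfolding st by simp
qed

theorem proposition3:
  fixes c G t :: real
  assumes "0 < c" and "c < G" and "0 < t"
  shows "(\<forall>tau' p'. regionV c G t tau' p' \<and>
            (\<forall>tau p. regionV c G t tau p \<longrightarrow> coop_area c G t tau p \<le> coop_area c G t tau' p') \<longrightarrow>
            A_c G t tau' p' (w1 c G t tau' p') 1 - A_s c t tau' p' (w0 c G t tau' p') (w1 c G t tau' p')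
              = 1 - 2 * w1 c G t tau' p' + w0 c G t tau' p')
       \<and> (\<forall>tau' p'. regionVI c G t tau' p' \<and>
            (\<forall>tau p. regionVI c G t tau p \<longrightarrow> coop_area c G t tau p \<le> coop_area c G t tau' p') \<longrightarrow>
            A_s c t tau' p' (w2 c G t tau' p') 1 - A_c G t tau' p' (w0 c G t tau' p') (w2 c G t tau' p')
              = 1 - 2 * w2 c G t tau' p' + w0 c G t tau' p')"
proof (intro conjI allI impI)
  fix tau' p'
  assume h: "regionV c G t tau' p' \<and>
            (\<forall>tau p. regionV c G t tau p \<longrightarrow> coop_area c G t tau p \<le> coop_area c G t tau' p')"
  show "A_c G t tau' p' (w1 c G t tau' p') 1 - A_s c t tau' p' (w0 c G t tau' p') (w1 c G t tau' p')
              = 1 - 2 * w1 c G t tau' p' + w0 c G t tau' p'"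
    by (rule regV_main[OF assms]) (use h in auto)
next
  fix tau' p'
  assume h: "regionVI c G t tau' p' \<and>
            (\<forall>tau p. regionVI c G t tau p \<longrightarrow> coop_area c G t tau p \<le> coop_area c G t tau' p')"
  show "A_s c t tau' p' (w2 c G t tau' p') 1 - A_c G t tau' p' (w0 c G t tau' p') (w2 c G t tau' p')
              = 1 - 2 * w2 c G t tau' p' + w0 c G t tau' p'"
    by (rule regVI_main[OF assms]) (use h in auto)
qed

end
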